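(* Let $r_{\mathrm c}>0$, let $w_{\mathrm c}(\lambda)=\sqrt{\lambda(\lambda-4r_{\mathrm c})}$ be the branch analytic in $|\lambda|>4r_{\mathrm c}$ with $w_{\mathrm c}(\lambda)\sim\lambda$ as $\lambda\to\infty$, and let $I\subset\mathbb{R}$ be an open interval. Let $$\mathfrak a(\bar\epsilon,x)=r_{\mathrm c}+\sum_{k\ge 1}\mathfrak a_k(x)\bar\epsilon^{k},\qquad \mathbb V(\lambda,\bar\epsilon;x)=\sum_{k\ge 0}\mathbb V^{[k]}(\lambda,x)\bar\epsilon^{k}$$ be formal power series in $\bar\epsilon$ with $\mathfrak a_k\in C^\infty(I)$, each $\mathbb V^{[k]}$ analytic in $\lambda$ for $|\lambda|>4r_{\mathrm c}$ and $C^\infty$ in $x$, and $\mathbb V^{[0]}=\lambda/w_{\mathrm c}$. Assume that, as formal power series in $\bar\epsilon$, $$\mathfrak a(\bar\epsilon,x)\big(\mathbb V(\lambda,\bar\epsilon;x)+\mathbb V(\lambda,-\bar\epsilon;x-\bar\epsilon)\big)\big(\mathbb V(\lambda,\bar\epsilon;x)+\mathbb V(\lambda,-\bar\epsilon;x+\bar\epsilon)\big)=\lambda\big(\mathbb V(\lambda,\bar\epsilon;x)^2-1\big).$$ Then the two formal series $$E_\mp(\bar\epsilon)=\lambda\,\mathbb V(\lambda,\bar\epsilon;x\mp\tfrac{\bar\epsilon}{2})-\mathfrak a(\bar\epsilon,x\mp\tfrac{\bar\epsilon}{2})\Big[\mathbb V(\lambda,\bar\epsilon;x\mp\tfrac{\bar\epsilon}{2})+\mathbb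 V(\lambda,-\bar\epsilon;x\mp\tfrac{3\bar\epsilon}{2})\Big]$$ (one with all upper signs, one with all lower signs) are even functions of $\bar\epsilon$, i.e. all coefficients of odd powers of $\bar\epsilon$ vanish.
   Context: Shifted and sign-reversed series are understood formally: for $F(\bar\epsilon;x)=\sum_kF_k(x)\bar\epsilon^k$ and constants $c$, $F(\pm\bar\epsilon;x+c\bar\epsilon)=\sum_{k,n}(\pm1)^kF_k^{(n)}(x)c^n\bar\epsilon^{k+n}/n!$; equalities of formal series mean equality of coefficients of each power of $\bar\epsilon$ (coefficients being functions of $\lambda$ and $x$). *)

theory Defs
  imports "HOL-Complex_Analysis.Complex_Analysis"
begin

definition xderiv :: "(real \<Rightarrow> 'a::real_normed_vector) \<Rightarrow> real \<Rightarrow> 'a" where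
  "xderiv f x = vector_derivative f (at x)"

definition smooth_on :: "real set \<Rightarrow> (real \<Rightarrow> 'a::real_normed_vector) \<Rightarrow> bool" where
  "smooth_on I f \<longleftrightarrow> (\<forall>n. \<forall>x\<in>I. ((xderiv ^^ n) f) differentiable (at x))"

text \<open>The branch of sqrt(lambda (lambda - 4 r)) analytic in |lambda| > 4r with w ~ lambda at infinity.\<close>
definition w_c :: "real \<Rightarrow> complex \<Rightarrow> complex" where
  "w_c r l = l * csqrt (1 - 4 * of_real r / l)"

text \<open>Formal power series in eps whose coefficients are functions of x:
  F :: nat => real => complex, F k x = coefficient of eps^k.\<close>

text \<open>F(s*eps; x + c*eps), coefficient m:
  sum over k+n=m of s^k F_k^(n)(x) c^n / n!.\<close>
definition fshift :: "real \<Rightarrow> real \<Rightarrow> (nat \<Rightarrow> real \<Rightarrow> complex) \<Rightarrow> nat \<Rightarrow> real \<Rightarrow> complex" where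
  "fshift s c F m x = (\<Sum>n\<le>m. of_real (s ^ (m - n) * c ^ n / fact n) * (xderiv ^^ n) (F (m - n)) x)"

definition fmul :: "(nat \<Rightarrow> real \<Rightarrow> complex) \<Rightarrow> (nat \<Rightarrow> real \<Rightarrow> complex) \<Rightarrow> nat \<Rightarrow> real \<Rightarrow> complex" where
  "fmul F G m x = (\<Sum>k\<le>m. F k x * G (m - k) x)"

definition fadd :: "(nat \<Rightarrow> real \<Rightarrow> complex) \<Rightarrow> (nat \<Rightarrow> real \<Rightarrow> complex) \<Rightarrow> nat \<Rightarrow> real \<Rightarrow> complex" where
  "fadd F G m x = F m x + G m x"

definition fsub :: "(nat \<Rightarrow> real \<Rightarrow> complex) \<Rightarrow> (nat \<Rightarrow> real \<Rightarrow> complex) \<Rightarrow> nat \<Rightarrow> real \<Rightarrow> complex" where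
  "fsub F G m x = F m x - G m x"

definition fscale :: "complex \<Rightarrow> (nat \<Rightarrow> real \<Rightarrow> complex) \<Rightarrow> nat \<Rightarrow> real \<Rightarrow> complex" where
  "fscale c F m x = c * F m x"

definition fone :: "nat \<Rightarrow> real \<Rightarrow> complex" where
  "fone m x = (if m = 0 then 1 else 0)"

end

theory Submission
  imports Defs "HOL-Computational_Algebra.Formal_Power_Series"
begin


lemma xderiv_cong:
  assumes "open I" "y \<in> I" "\<And>z. z \<in> I \<Longrightarrow> f z = g z"
  shows "xderiv f y = xderiv g y"
proof -
  have "(f has_vector_derivative d) (at y) = (g has_vector_derivative d) (at y)" for d
  proof
    assume "(f has_vector_derivative d) (at y)"
    thus "(g has_vector_derivative d) (at y)"
      by (rule has_vector_derivative_transform_within_open[OF _ assms(1,2)]) (simp add: assms(3))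
  next
    assume "(g has_vector_derivative d) (at y)"
    thus "(f has_vector_derivative d) (at y)"
      by (rule has_vector_derivative_transform_within_open[OF _ assms(1,2)]) (simp add: assms(3))
  qed
  then show ?thesis unfolding xderiv_def vector_derivative_def by simp
qed

lemma D_cong:
  assumes "open I" "\<And>z. z \<in> I \<Longrightarrow> f z = g z" "y \<in> I"
  shows "(xderiv ^^ n) f y = (xderiv ^^ n) g y"
  using assms(3)
proof (induction n arbitrary: y)
  case 0 then show ?case using assms by simp
next
  case (Suc n) then show ?case
    using xderiv_cong[OF assms(1), of y "(xderiv ^^ n) f" "(xderiv ^^ n) g"] by simp
qed

lemma smooth_hd:
  assumes "smooth_on I f" "y \<in> I"
  shows "((xderiv ^^ n) f has_vector_derivative (xderiv ^^ Suc n) f y) (at y)"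
  using assms unfolding smooth_on_def by (simp add: xderiv_def vector_derivative_works[symmetric])

lemma smooth_mk:
  assumes I: "open I" and h0: "\<And>y. y \<in> I \<Longrightarrow> h 0 y = g y"
    and hd: "\<And>n y. y \<in> I \<Longrightarrow> (h n has_vector_derivative h (Suc n) y) (at y)"
  shows "\<And>n y. y \<in> I \<Longrightarrow> (xderiv ^^ n) g y = h n y" and "smooth_on I g"
proof -
  have eq: "(xderiv ^^ n) g y = h n y" if "y \<in> I" for n y
    using that
  proof (induction n arbitrary: y)
    case 0 thus ?case using h0 by simp
  next
    case (Suc n y)
    have "(xderiv ^^ Suc n) g y = xderiv ((xderiv ^^ n) g) y" by simp
    also have "\<dots> = xderiv (h n) y"
      using xderiv_cong[OF I Suc.prems, of "(xderiv ^^ n) g" "h n"] Suc.IH by simp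
    also have "\<dots> = h (Suc n) y" unfolding xderiv_def using vector_derivative_at hd Suc.prems by blast
    finally show ?case .
  qed
  show "\<And>n y. y \<in> I \<Longrightarrow> (xderiv ^^ n) g y = h n y" using eq by blast
  show "smooth_on I g" unfolding smooth_on_def
  proof (intro allI ballI)
    fix n y assume y: "y \<in> I"
    have "(h n has_vector_derivative h (Suc n) y) (at y)" using hd y .
    hence "((xderiv ^^ n) g has_vector_derivative h (Suc n) y) (at y)"
      by (rule has_vector_derivative_transform_within_open[OF _ I y]) (simp add: eq)
    thus "(xderiv ^^ n) g differentiable at y" by (rule differentiableI_vector)
  qed
qed

lemma smooth_cong:
  assumes "open I" "smooth_on I f" "\<And>z. z \<in> I \<Longrightarrow> f z = g z"
  shows "smooth_on I g"
  by (rule smooth_mk(2)[of I "\<lambda>n. (xderiv ^^ n) f"])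
     (use assms smooth_hd in auto)

lemma D_D: "(xderiv ^^ n) ((xderiv ^^ p) f) = (xderiv ^^ (n + p)) f"
  by (simp add: funpow_add)

lemma smooth_D:
  assumes "smooth_on I f" shows "smooth_on I ((xderiv ^^ p) f)"
  using assms unfolding smooth_on_def by (simp add: D_D)

lemma smooth_sum:
  fixes f :: "'j \<Rightarrow> real \<Rightarrow> complex"
  assumes I: "open I" and fin: "finite J" and sm: "\<And>j. j \<in> J \<Longrightarrow> smooth_on I (f j)"
  shows "smooth_on I (\<lambda>y. \<Sum>j\<in>J. c j * f j y)"
    and "y \<in> I \<Longrightarrow> (xderiv ^^ n) (\<lambda>y. \<Sum>j\<in>J. c j * f j y) y = (\<Sum>j\<in>J. c j * (xderiv ^^ n) (f j) y)"
proof -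
  let ?h = "\<lambda>n y. \<Sum>j\<in>J. c j * (xderiv ^^ n) (f j) y"
  have hd: "(?h n has_vector_derivative ?h (Suc n) y) (at y)" if "y \<in> I" for n y
    by (intro has_vector_derivative_sum has_vector_derivative_mult_right smooth_hd[of I] sm that)
  show "smooth_on I (\<lambda>y. \<Sum>j\<in>J. c j * f j y)"
    by (rule smooth_mk(2)[of I ?h]) (use I hd in auto)
  show "y \<in> I \<Longrightarrow> (xderiv ^^ n) (\<lambda>y. \<Sum>j\<in>J. c j * f j y) y = ?h n y"
    by (rule smooth_mk(1)[of I ?h]) (use I hd in auto)
qed

lemma smooth_add:
  fixes f g :: "real \<Rightarrow> complex"
  assumes I: "open I" and sm: "smooth_on I f" "smooth_on I g"
  shows "smooth_on I (\<lambda>y. a * f y + b * g y)"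
    and "y \<in> I \<Longrightarrow> (xderiv ^^ n) (\<lambda>y. a * f y + b * g y) y = a * (xderiv ^^ n) f y + b * (xderiv ^^ n) g y"
proof -
  let ?h = "\<lambda>n y. a * (xderiv ^^ n) f y + b * (xderiv ^^ n) g y"
  have hd: "(?h n has_vector_derivative ?h (Suc n) y) (at y)" if "y \<in> I" for n y
    by (intro has_vector_derivative_add has_vector_derivative_mult_right smooth_hd[of I] sm that)
  show "smooth_on I (\<lambda>y. a * f y + b * g y)"
    by (rule smooth_mk(2)[of I ?h]) (use I hd in auto)
  show "y \<in> I \<Longrightarrow> (xderiv ^^ n) (\<lambda>y. a * f y + b * g y) y = ?h n y"
    by (rule smooth_mk(1)[of I ?h]) (use I hd in auto)
qed

lemma smooth_const:
  fixes a :: complex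
  assumes I: "open I"
  shows "smooth_on I (\<lambda>y. a)"
    and "y \<in> I \<Longrightarrow> (xderiv ^^ n) (\<lambda>y. a) y = (if n = 0 then a else 0)"
proof -
  let ?h = "\<lambda>n y. if n = 0 then a else 0"
  have hd: "(?h n has_vector_derivative ?h (Suc n) y) (at y)" if "y \<in> I" for n y
    by simp
  show "smooth_on I (\<lambda>y. a)"
    by (rule smooth_mk(2)[of I ?h]) (use I hd in auto)
  show "y \<in> I \<Longrightarrow> (xderiv ^^ n) (\<lambda>y. a) y = ?h n y"
    by (rule smooth_mk(1)[of I ?h]) (use I hd in auto)
qed

lemma smooth_of_real:
  fixes f :: "real \<Rightarrow> real"
  assumes I: "open I" and sm: "smooth_on I f"
  shows "smooth_on I (\<lambda>y. complex_of_real (f y))"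
    and "y \<in> I \<Longrightarrow> (xderiv ^^ n) (\<lambda>y. complex_of_real (f y)) y = of_real ((xderiv ^^ n) f y)"
proof -
  let ?h = "\<lambda>n y. complex_of_real ((xderiv ^^ n) f y)"
  have hd: "(?h n has_vector_derivative ?h (Suc n) y) (at y)" if "y \<in> I" for n y
    by (intro has_vector_derivative_of_real smooth_hd[OF sm that, unfolded has_real_derivative_iff_has_vector_derivative[symmetric]])
  show "smooth_on I (\<lambda>y. complex_of_real (f y))"
    by (rule smooth_mk(2)[of I ?h]) (use I hd in auto)
  show "y \<in> I \<Longrightarrow> (xderiv ^^ n) (\<lambda>y. complex_of_real (f y)) y = ?h n y"
    by (rule smooth_mk(1)[of I ?h]) (use I hd in auto)
qed

lemma smooth_mult:
  fixes f g :: "real \<Rightarrow> complex"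
  assumes I: "open I" and sf: "smooth_on I f" and sg: "smooth_on I g"
  shows "smooth_on I (\<lambda>y. f y * g y)"
    and "y \<in> I \<Longrightarrow> (xderiv ^^ n) (\<lambda>y. f y * g y) y =
           (\<Sum>i = 0..n. of_nat (n choose i) * (xderiv ^^ i) f y * (xderiv ^^ (n-i)) g y)"
proof -
  let ?h = "\<lambda>n y. \<Sum>i = 0..n. of_nat (n choose i) * (xderiv ^^ i) f y * (xderiv ^^ (n-i)) g y"
  have hd: "(?h n has_vector_derivative ?h (Suc n) y) (at y)" if y: "y \<in> I" for n y
  proof -
    let ?F = "\<lambda>i. (xderiv ^^ i) f y" and ?G = "\<lambda>i. (xderiv ^^ i) g y"
    have sumeq: "(\<Sum>i = 0..n. of_nat (n choose i) * (?F i * ?G (Suc (n - i)) + ?F (Suc i) * ?G (n - i)))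
        = ?h (Suc n) y"
      apply (simp add: Suc_choose algebra_simps sum.distrib)
      apply (subst (4) sum_Suc_reindex)
      apply (auto simp: algebra_simps Suc_diff_le intro: sum.cong)
      done
    have "(?h n has_vector_derivative
        (\<Sum>i = 0..n. of_nat (n choose i) * (?F i * ?G (Suc (n - i)) + ?F (Suc i) * ?G (n - i)))) (at y)"
      apply (intro has_vector_derivative_sum)
      apply (subst mult.assoc)
      apply (intro has_vector_derivative_mult_right has_vector_derivative_mult smooth_hd[of I] sf sg y)
      done
    thus ?thesis using sumeq by simp
  qed
  show "smooth_on I (\<lambda>y. f y * g y)"
    by (rule smooth_mk(2)[of I ?h]) (use I hd in auto)
  show "y \<in> I \<Longrightarrow> (xderiv ^^ n) (\<lambda>y. f y * g y) y = ?h n y"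
    by (rule smooth_mk(1)[of I ?h]) (use I hd in auto)
qed



definition smS :: "real set \<Rightarrow> (nat \<Rightarrow> real \<Rightarrow> complex) \<Rightarrow> bool" where
  "smS I F \<longleftrightarrow> (\<forall>k. smooth_on I (F k))"
definition Dser :: "nat \<Rightarrow> (nat \<Rightarrow> real \<Rightarrow> complex) \<Rightarrow> nat \<Rightarrow> real \<Rightarrow> complex" where
  "Dser n F = (\<lambda>k. (xderiv ^^ n) (F k))"
definition toF :: "(nat \<Rightarrow> real \<Rightarrow> complex) \<Rightarrow> real \<Rightarrow> complex fps" where
  "toF F x = Abs_fps (\<lambda>m. F m x)"

lemma toF_nth[simp]: "toF F x $ m = F m x" by (simp add: toF_def)

lemma fshift_fun: "fshift s c F m = (\<lambda>y. \<Sum>n\<in>{..m}. of_real (s ^ (m - n) * c ^ n / fact n) * (xderiv ^^ n) (F (m - n)) y)"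
  by (simp add: fshift_def fun_eq_iff)

lemma smS_fshift:
  assumes I: "open I" and F: "smS I F"
  shows "smS I (fshift s c F)"
  unfolding smS_def
proof
  fix k show "smooth_on I (fshift s c F k)"
    unfolding fshift_fun by (rule smooth_sum(1)[OF I]) (use F in \<open>auto simp: smS_def intro: smooth_D\<close>)
qed

lemma D_fshift:
  assumes I: "open I" and F: "smS I F" and y: "y \<in> I"
  shows "(xderiv ^^ p) (fshift s c F m) y = fshift s c (Dser p F) m y"
  unfolding fshift_fun
  apply (subst smooth_sum(2)[OF I _ _ y])
  using F apply (auto simp: smS_def intro!: smooth_D)
  apply (simp add: Dser_def D_D add.commute)
  done

lemma fmul_fun: "fmul F G m = (\<lambda>y. \<Sum>k\<in>{..m}. 1 * (\<lambda>y. F k y * G (m - k) y) y)"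
  by (simp add: fmul_def fun_eq_iff)

lemma smS_fmul:
  assumes I: "open I" and F: "smS I F" and G: "smS I G"
  shows "smS I (fmul F G)"
  unfolding smS_def
proof
  fix m
  have "smooth_on I (\<lambda>y. \<Sum>k\<in>{..m}. (\<lambda>_. 1) k * (\<lambda>k y. F k y * G (m - k) y) k y)"
    by (rule smooth_sum(1)[OF I]) (use F G in \<open>auto simp: smS_def intro: smooth_mult[OF I]\<close>)
  then show "smooth_on I (fmul F G m)" by (simp add: fmul_def[abs_def])
qed

lemma D_fmul:
  assumes I: "open I" and F: "smS I F" and G: "smS I G" and y: "y \<in> I"
  shows "(xderiv ^^ p) (fmul F G m) y =
     (\<Sum>k\<in>{..m}. \<Sum>i = 0..p. of_nat (p choose i) * (xderiv ^^ i) (F k) y * (xderiv ^^ (p-i)) (G (m - k)) y)"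
  unfolding fmul_fun
  apply (subst smooth_sum(2)[OF I _ _ y])
  using F G apply (auto simp: smS_def intro!: smooth_mult[OF I])
  apply (rule sum.cong, simp)
  apply (rule smooth_mult(2)[OF I _ _ y])
  using F G apply (auto simp: smS_def)
  done

lemma toF_Dser_fmul:
  assumes I: "open I" and F: "smS I F" and G: "smS I G" and y: "y \<in> I"
  shows "toF (Dser p (fmul F G)) y =
     (\<Sum>i = 0..p. fps_const (of_nat (p choose i)) * (toF (Dser i F) y * toF (Dser (p - i) G) y))"
proof (rule fps_ext)
  fix m
  show "toF (Dser p (fmul F G)) y $ m = (\<Sum>i = 0..p. fps_const (of_nat (p choose i)) * (toF (Dser i F) y * toF (Dser (p - i) G) y)) $ m"
    apply (simp only: fps_sum_nth fps_mult_left_const_nth)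
    apply (simp add: fps_mult_nth Dser_def D_fmul[OF I F G y] sum_distrib_left atLeast0AtMost)
    apply (subst sum.swap)
    apply (simp add: mult.assoc)
    done
qed

lemma smS_fadd: "open I \<Longrightarrow> smS I F \<Longrightarrow> smS I G \<Longrightarrow> smS I (fadd F G)"
  using smooth_add(1)[of I "F k" "G k" 1 1 for k]
  by (auto simp: smS_def fadd_def[abs_def])

lemma smS_fsub: "open I \<Longrightarrow> smS I F \<Longrightarrow> smS I G \<Longrightarrow> smS I (fsub F G)"
  using smooth_add(1)[of I "F k" "G k" 1 "-1" for k]
  by (auto simp: smS_def fsub_def[abs_def])

lemma smS_fscale: "open I \<Longrightarrow> smS I F \<Longrightarrow> smS I (fscale l F)"
  using smooth_add(1)[of I "F k" "F k" l 0 for k]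
  by (auto simp: smS_def fscale_def[abs_def])

lemma smS_fone: "open I \<Longrightarrow> smS I fone"
  using smooth_const(1)[of I]
  by (auto simp: smS_def fone_def[abs_def])



definition sig :: "real \<Rightarrow> complex fps \<Rightarrow> complex fps" where
  "sig s f = Abs_fps (\<lambda>k. of_real (s ^ k) * f $ k)"

lemma sig_nth[simp]: "sig s f $ k = of_real (s ^ k) * f $ k" by (simp add: sig_def)

lemma sig_mult: "sig s (f * g) = sig s f * sig s g"
proof (rule fps_ext)
  fix n
  have "(\<Sum>i=0..n. of_real (s ^ n) * (f $ i * g $ (n - i))) =
        (\<Sum>i=0..n. of_real (s ^ i) * f $ i * (of_real (s ^ (n - i)) * g $ (n - i)))"
  proof (rule sum.cong)
    fix i assume "i \<in> {0..n}"
    hence "s ^ n = s ^ i * s ^ (n - i)" by (simp add: power_add[symmetric])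
    thus "of_real (s ^ n) * (f $ i * g $ (n - i)) = of_real (s ^ i) * f $ i * (of_real (s ^ (n - i)) * g $ (n - i))"
      by (simp add: algebra_simps)
  qed simp
  thus "sig s (f * g) $ n = (sig s f * sig s g) $ n"
    by (simp add: fps_mult_nth sum_distrib_left)
qed

lemma sig_sum: "sig s (\<Sum>i\<in>A. f i) = (\<Sum>i\<in>A. sig s (f i))"
  by (rule fps_ext) (simp add: fps_sum_nth sum_distrib_left)

lemma sig_const_mult: "sig s (fps_const a * f) = fps_const a * sig s f"
  by (rule fps_ext) simp

lemma sig_Xpow: "sig s (fps_X ^ j * f) = fps_const (of_real (s ^ j)) * (fps_X ^ j * sig s f)"
  by (rule fps_ext) (simp add: fps_X_power_mult_nth power_add[symmetric])

lemma sig_sig: "sig s (sig s' f) = sig (s * s') f"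
  by (rule fps_ext) (simp add: power_mult_distrib)

definition eqN :: "nat \<Rightarrow> complex fps \<Rightarrow> complex fps \<Rightarrow> bool" where
  "eqN N f g \<longleftrightarrow> (\<forall>k\<le>N. f $ k = g $ k)"

lemma eqN_refl: "eqN N f f" by (simp add: eqN_def)
lemma eqN_sym: "eqN N f g \<Longrightarrow> eqN N g f" by (simp add: eqN_def)
lemma eqN_trans: "eqN N f g \<Longrightarrow> eqN N g h \<Longrightarrow> eqN N f h" by (simp add: eqN_def)
lemma eqN_eq: "f = g \<Longrightarrow> eqN N f g" by (simp add: eqN_def)

lemma eqN_mult: "eqN N f f' \<Longrightarrow> eqN N g g' \<Longrightarrow> eqN N (f * g) (f' * g')"
  unfolding eqN_def fps_mult_nth by (auto intro!: sum.cong)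

lemma eqN_add: "eqN N f f' \<Longrightarrow> eqN N g g' \<Longrightarrow> eqN N (f + g) (f' + g')"
  unfolding eqN_def by auto

lemma eqN_sum: "finite A \<Longrightarrow> (\<And>i. i \<in> A \<Longrightarrow> eqN N (f i) (g i)) \<Longrightarrow> eqN N (\<Sum>i\<in>A. f i) (\<Sum>i\<in>A. g i)"
  unfolding eqN_def by (auto simp: fps_sum_nth intro!: sum.cong)

lemma eqN_sig: "eqN N f g \<Longrightarrow> eqN N (sig s f) (sig s g)"
  unfolding eqN_def by auto

lemma eqN_Xpow0: "N < j \<Longrightarrow> eqN N (fps_const a * (fps_X ^ j * f)) 0"
  unfolding eqN_def by (auto simp: fps_X_power_mult_nth)

lemma eqN_square_triangle:
  assumes "\<And>i j. m < i + j \<Longrightarrow> eqN m (P i j) 0"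
  shows "eqN m (\<Sum>(i,j)\<in>{..m}\<times>{..m}. P i j) (\<Sum>(i,j)\<in>{(i,j). i + j \<le> m}. P i j)"
proof -
  have sub: "{(i,j). i + j \<le> m} \<subseteq> {..m}\<times>{..m}" by auto
  have fin: "finite ({..m}\<times>{..m})" by simp
  have "(\<Sum>(i,j)\<in>{..m}\<times>{..m}. P i j) = (\<Sum>(i,j)\<in>{..m}\<times>{..m} - {(i,j). i + j \<le> m}. P i j) + (\<Sum>(i,j)\<in>{(i,j). i + j \<le> m}. P i j)"
    using sum.subset_diff[OF sub fin] by simp
  moreover have "eqN m (\<Sum>(i,j)\<in>{..m}\<times>{..m} - {(i,j). i + j \<le> m}. P i j) (\<Sum>(i,j)\<in>{..m}\<times>{..m} - {(i,j). i + j \<le> m}. 0)"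
    by (rule eqN_sum) (use assms in auto)
  ultimately show ?thesis unfolding eqN_def by auto
qed

definition JJ :: "real \<Rightarrow> real \<Rightarrow> (nat \<Rightarrow> real \<Rightarrow> complex) \<Rightarrow> real \<Rightarrow> nat \<Rightarrow> complex fps" where
  "JJ s c F x n = fps_const (of_real (c ^ n / fact n)) * (fps_X ^ n * sig s (toF (Dser n F) x))"

lemma fshift_JJ: "eqN N (toF (fshift s c F) x) (\<Sum>n\<le>N. JJ s c F x n)"
  unfolding eqN_def
proof (intro allI impI)
  fix k assume k: "k \<le> N"
  have "(\<Sum>n\<le>N. JJ s c F x n) $ k = (\<Sum>n\<in>{..N}. if n \<in> {..k} then of_real (c ^ n / fact n) * (of_real (s ^ (k - n)) * (xderiv ^^ n) (F (k - n)) x) else 0)"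
    by (auto simp: fps_sum_nth JJ_def fps_X_power_mult_nth Dser_def intro!: sum.cong)
  also have "\<dots> = (\<Sum>n\<in>{..N} \<inter> {..k}. of_real (c ^ n / fact n) * (of_real (s ^ (k - n)) * (xderiv ^^ n) (F (k - n)) x))"
    by (rule sum.inter_restrict[symmetric]) simp
  also have "{..N} \<inter> {..k} = {..k}" using k by auto
  finally show "toF (fshift s c F) x $ k = (\<Sum>n\<le>N. JJ s c F x n) $ k"
    by (simp add: fshift_def algebra_simps)
qed



lemma coef_binom:
  fixes c :: real assumes "i \<le> n"
  shows "(complex_of_real (c ^ n / fact n)) * of_nat (n choose i)
       = complex_of_real (c ^ i / fact i) * complex_of_real (c ^ (n - i) / fact (n - i))"
proof -
  have "real (n choose i) = fact n / (fact i * fact (n - i))" using binomial_fact[OF assms] by simp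
  moreover have "c ^ n = c ^ i * c ^ (n - i)" using assms by (simp add: power_add[symmetric])
  ultimately have "c ^ n / fact n * real (n choose i) = c ^ i / fact i * (c ^ (n - i) / fact (n - i))"
    by (simp add: field_simps)
  hence "complex_of_real (c ^ n / fact n * real (n choose i)) = complex_of_real (c ^ i / fact i * (c ^ (n - i) / fact (n - i)))"
    by simp
  thus ?thesis by (simp only: of_real_mult of_real_of_nat_eq)
qed

lemma fps_rearr:
  fixes P Q :: "complex fps"
  assumes "a * b = a1 * a2" "i \<le> n"
  shows "fps_const a * (fps_X ^ n * (fps_const b * (P * Q))) =
         fps_const a1 * (fps_X ^ i * P) * (fps_const a2 * (fps_X ^ (n - i) * Q))"
proof -
  have X: "(fps_X::complex fps) ^ n = fps_X ^ i * fps_X ^ (n - i)" using assms(2) by (simp add: power_add[symmetric])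
  have C: "fps_const a * fps_const b = fps_const a1 * fps_const a2" using assms(1) by simp
  have "fps_const a * (fps_X ^ n * (fps_const b * (P * Q))) = (fps_const a * fps_const b) * fps_X ^ n * (P * Q)"
    by (simp only: mult.assoc mult.left_commute mult.commute)
  also have "\<dots> = (fps_const a1 * fps_const a2) * (fps_X ^ i * fps_X ^ (n - i)) * (P * Q)" by (simp only: C X)
  also have "\<dots> = fps_const a1 * (fps_X ^ i * P) * (fps_const a2 * (fps_X ^ (n - i) * Q))"
    by (simp only: mult.assoc mult.left_commute mult.commute)
  finally show ?thesis .
qed

lemma sig_const: "sig s (fps_const a) = fps_const a"
  by (rule fps_ext) simp

lemma JJ_fmul:
  assumes I: "open I" and F: "smS I F" and G: "smS I G" and x: "x \<in> I"
  shows "JJ s c (fmul F G) x n = (\<Sum>i=0..n. JJ s c F x i * JJ s c G x (n - i))"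
proof -
  have "JJ s c (fmul F G) x n = (\<Sum>i=0..n. fps_const (of_real (c ^ n / fact n)) * (fps_X ^ n *
          (fps_const (of_nat (n choose i)) * (sig s (toF (Dser i F) x) * sig s (toF (Dser (n - i) G) x)))))"
    unfolding JJ_def toF_Dser_fmul[OF I F G x] sig_sum sig_const_mult sig_mult sig_const
    by (simp add: sum_distrib_left)
  also have "\<dots> = (\<Sum>i=0..n. JJ s c F x i * JJ s c G x (n - i))"
    unfolding JJ_def by (intro sum.cong refl fps_rearr coef_binom) auto
  finally show ?thesis .
qed

lemma JJ_prod_eq0:
  "m < i + j \<Longrightarrow> eqN m (JJ s c F x i * JJ s c G x j) 0"
proof -
  assume "m < i + j"
  have "JJ s c F x i * JJ s c G x j = fps_const (of_real (c ^ i / fact i) * of_real (c ^ j / fact j)) *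
      (fps_X ^ (i + j) * (sig s (toF (Dser i F) x) * sig s (toF (Dser j G) x)))"
    unfolding JJ_def by (simp only: power_add fps_const_mult[symmetric] mult.assoc mult.left_commute mult.commute)
  thus ?thesis using eqN_Xpow0[OF \<open>m < i + j\<close>] by simp
qed

lemma fshift_fmul:
  assumes I: "open I" and F: "smS I F" and G: "smS I G" and x: "x \<in> I"
  shows "toF (fshift s c (fmul F G)) x = toF (fshift s c F) x * toF (fshift s c G) x"
proof (rule fps_ext)
  fix m
  have "eqN m (toF (fshift s c (fmul F G)) x) (\<Sum>n\<le>m. JJ s c (fmul F G) x n)" by (rule fshift_JJ)
  also have "(\<Sum>n\<le>m. JJ s c (fmul F G) x n) = (\<Sum>n\<le>m. \<Sum>i\<le>n. JJ s c F x i * JJ s c G x (n - i))"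
    by (simp add: JJ_fmul[OF I F G x] atLeast0AtMost)
  also have "\<dots> = (\<Sum>(i,j)\<in>{(i,j). i + j \<le> m}. JJ s c F x i * JJ s c G x j)"
    by (rule sum.triangle_reindex_eq[symmetric])
  finally have 1: "eqN m (toF (fshift s c (fmul F G)) x) (\<Sum>(i,j)\<in>{(i,j). i + j \<le> m}. JJ s c F x i * JJ s c G x j)" .
  have "eqN m (toF (fshift s c F) x * toF (fshift s c G) x) ((\<Sum>i\<le>m. JJ s c F x i) * (\<Sum>j\<le>m. JJ s c G x j))"
    by (intro eqN_mult fshift_JJ)
  also have "(\<Sum>i\<le>m. JJ s c F x i) * (\<Sum>j\<le>m. JJ s c G x j) = (\<Sum>(i,j)\<in>{..m}\<times>{..m}. JJ s c F x i * JJ s c G x j)"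
    by (simp add: sum_product sum.cartesian_product)
  finally have 2: "eqN m (toF (fshift s c F) x * toF (fshift s c G) x) (\<Sum>(i,j)\<in>{..m}\<times>{..m}. JJ s c F x i * JJ s c G x j)" .
  have 3: "eqN m (\<Sum>(i,j)\<in>{..m}\<times>{..m}. JJ s c F x i * JJ s c G x j) (\<Sum>(i,j)\<in>{(i,j). i + j \<le> m}. JJ s c F x i * JJ s c G x j)"
    by (rule eqN_square_triangle) (rule JJ_prod_eq0)
  from 1 2 3 show "toF (fshift s c (fmul F G)) x $ m = (toF (fshift s c F) x * toF (fshift s c G) x) $ m"
    unfolding eqN_def by auto
qed



lemma fps_const_sum: "fps_const (\<Sum>i\<in>A. f i) = (\<Sum>i\<in>A. fps_const (f i))"
proof (induction A rule: infinite_finite_induct)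
  case (insert a A)
  then show ?case by (simp add: fps_const_add[symmetric] del: fps_const_add)
qed auto

lemma toF_Dser_fshift:
  assumes I: "open I" and F: "smS I F" and x: "x \<in> I"
  shows "toF (Dser n (fshift s' c' F)) x = toF (fshift s' c' (Dser n F)) x"
  by (rule fps_ext) (simp add: Dser_def D_fshift[OF I F x])

lemma coef_binom2:
  fixes c d :: real
  shows "(\<Sum>n\<le>p. complex_of_real (c ^ n / fact n * (d ^ (p - n) / fact (p - n))))
       = complex_of_real ((c + d) ^ p / fact p)"
proof -
  have "(c + d) ^ p / fact p = (\<Sum>n\<le>p. real (p choose n) * c ^ n * d ^ (p - n)) / fact p"
    by (simp add: binomial_ring)
  also have "\<dots> = (\<Sum>n\<le>p. c ^ n / fact n * (d ^ (p - n) / fact (p - n)))"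
    unfolding sum_divide_distrib
  proof (rule sum.cong)
    fix n assume "n \<in> {..p}"
    hence "n \<le> p" by simp
    hence "real (p choose n) = fact p / (fact n * fact (p - n))" using binomial_fact[OF \<open>n \<le> p\<close>] by simp
    thus "real (p choose n) * c ^ n * d ^ (p - n) / fact p = c ^ n / fact n * (d ^ (p - n) / fact (p - n))"
      by (simp add: field_simps)
  qed simp
  finally show ?thesis by (simp only: of_real_sum[symmetric])
qed

lemma fps_rearr2:
  fixes Q :: "complex fps"
  shows "fps_const a * (fps_X ^ n * (fps_const b * (fps_const d * (fps_X ^ j * Q)))) =
         fps_const (a * (b * d)) * (fps_X ^ (n + j) * Q)"
  by (simp only: power_add fps_const_mult[symmetric] mult.assoc mult.left_commute mult.commute)

lemma fshift_fshift:
  assumes I: "open I" and F: "smS I F" and x: "x \<in> I"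
  shows "toF (fshift s c (fshift s' c' F)) x = toF (fshift (s * s') (c + c' * s) F) x"
proof (rule fps_ext)
  fix m
  define T where "T n j = fps_const (complex_of_real (c ^ n / fact n) * (complex_of_real (c' ^ j / fact j) * complex_of_real (s ^ j)))
     * (fps_X ^ (n + j) * sig (s * s') (toF (Dser (n + j) F) x))" for n j
  have step: "eqN m (JJ s c (fshift s' c' F) x n) (\<Sum>j\<le>m. T n j)" for n
  proof -
    have "JJ s c (fshift s' c' F) x n = fps_const (of_real (c ^ n / fact n)) * (fps_X ^ n * sig s (toF (fshift s' c' (Dser n F)) x))"
      unfolding JJ_def toF_Dser_fshift[OF I F x] ..
    moreover have "eqN m (fps_const (of_real (c ^ n / fact n)) * (fps_X ^ n * sig s (toF (fshift s' c' (Dser n F)) x)))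
        (fps_const (of_real (c ^ n / fact n)) * (fps_X ^ n * sig s (\<Sum>j\<le>m. JJ s' c' (Dser n F) x j)))"
      by (intro eqN_mult eqN_refl eqN_sig fshift_JJ)
    moreover have "fps_const (of_real (c ^ n / fact n)) * (fps_X ^ n * sig s (\<Sum>j\<le>m. JJ s' c' (Dser n F) x j)) = (\<Sum>j\<le>m. T n j)"
      unfolding sig_sum sum_distrib_left
    proof (rule sum.cong[OF refl])
      fix j
      have "Dser j (Dser n F) = Dser (n + j) F" by (simp add: Dser_def D_D add.commute)
      thus "fps_const (of_real (c ^ n / fact n)) * (fps_X ^ n * sig s (JJ s' c' (Dser n F) x j)) = T n j"
        unfolding JJ_def T_def sig_const_mult sig_Xpow sig_sig by (simp only: fps_rearr2)
    qed
    ultimately show ?thesis by simp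
  qed
  have "eqN m (toF (fshift s c (fshift s' c' F)) x) (\<Sum>n\<le>m. JJ s c (fshift s' c' F) x n)" by (rule fshift_JJ)
  also have "eqN m (\<Sum>n\<le>m. JJ s c (fshift s' c' F) x n) (\<Sum>n\<le>m. \<Sum>j\<le>m. T n j)"
    by (intro eqN_sum step) simp
  moreover have "(\<Sum>n\<le>m. \<Sum>j\<le>m. T n j) = (\<Sum>(n,j)\<in>{..m}\<times>{..m}. T n j)"
    by (simp add: sum.cartesian_product)
  moreover have "eqN m (\<Sum>(n,j)\<in>{..m}\<times>{..m}. T n j) (\<Sum>(n,j)\<in>{(n,j). n + j \<le> m}. T n j)"
    by (rule eqN_square_triangle) (simp add: T_def eqN_Xpow0)
  moreover have "(\<Sum>(n,j)\<in>{(n,j). n + j \<le> m}. T n j) = (\<Sum>p\<le>m. \<Sum>n\<le>p. T n (p - n))"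
    by (rule sum.triangle_reindex_eq)
  moreover have "(\<Sum>p\<le>m. \<Sum>n\<le>p. T n (p - n)) = (\<Sum>p\<le>m. JJ (s * s') (c + c' * s) F x p)"
  proof (rule sum.cong[OF refl])
    fix p
    have "(\<Sum>n\<le>p. T n (p - n)) = (\<Sum>n\<le>p. fps_const (complex_of_real (c ^ n / fact n * ((c' * s) ^ (p - n) / fact (p - n))))
       * (fps_X ^ p * sig (s * s') (toF (Dser p F) x)))"
      by (rule sum.cong[OF refl]) (auto simp: T_def power_mult_distrib)
    also have "\<dots> = fps_const (\<Sum>n\<le>p. complex_of_real (c ^ n / fact n * ((c' * s) ^ (p - n) / fact (p - n))))
       * (fps_X ^ p * sig (s * s') (toF (Dser p F) x))"
      by (simp only: fps_const_sum sum_distrib_right)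
    also have "\<dots> = JJ (s * s') (c + c' * s) F x p"
      unfolding coef_binom2 JJ_def ..
    finally show "(\<Sum>n\<le>p. T n (p - n)) = JJ (s * s') (c + c' * s) F x p" .
  qed
  moreover have "eqN m (toF (fshift (s * s') (c + c' * s) F) x) (\<Sum>p\<le>m. JJ (s * s') (c + c' * s) F x p)"
    by (rule fshift_JJ)
  ultimately show "toF (fshift s c (fshift s' c' F)) x $ m = toF (fshift (s * s') (c + c' * s) F) x $ m"
    unfolding eqN_def by auto
qed



lemma D_fadd:
  assumes I: "open I" and F: "smS I F" and G: "smS I G" and y: "y \<in> I"
  shows "(xderiv ^^ n) (fadd F G k) y = (xderiv ^^ n) (F k) y + (xderiv ^^ n) (G k) y"
proof -
  have "(xderiv ^^ n) (\<lambda>y. 1 * F k y + 1 * G k y) y = 1 * (xderiv ^^ n) (F k) y + 1 * (xderiv ^^ n) (G k) y"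
    by (rule smooth_add(2)[OF I]) (use F G y in \<open>auto simp: smS_def\<close>)
  thus ?thesis by (simp add: fadd_def[abs_def])
qed

lemma D_fsub:
  assumes I: "open I" and F: "smS I F" and G: "smS I G" and y: "y \<in> I"
  shows "(xderiv ^^ n) (fsub F G k) y = (xderiv ^^ n) (F k) y - (xderiv ^^ n) (G k) y"
proof -
  have "(xderiv ^^ n) (\<lambda>y. 1 * F k y + (-1) * G k y) y = 1 * (xderiv ^^ n) (F k) y + (-1) * (xderiv ^^ n) (G k) y"
    by (rule smooth_add(2)[OF I]) (use F G y in \<open>auto simp: smS_def\<close>)
  thus ?thesis by (simp add: fsub_def[abs_def])
qed

lemma D_fscale:
  assumes I: "open I" and F: "smS I F" and y: "y \<in> I"
  shows "(xderiv ^^ n) (fscale l F k) y = l * (xderiv ^^ n) (F k) y"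
proof -
  have "(xderiv ^^ n) (\<lambda>y. l * F k y + 0 * F k y) y = l * (xderiv ^^ n) (F k) y + 0 * (xderiv ^^ n) (F k) y"
    by (rule smooth_add(2)[OF I]) (use F y in \<open>auto simp: smS_def\<close>)
  thus ?thesis by (simp add: fscale_def[abs_def])
qed

lemma D_fone:
  assumes I: "open I" and y: "y \<in> I"
  shows "(xderiv ^^ n) (fone k) y = (if n = 0 \<and> k = 0 then 1 else 0)"
proof -
  have "fone k = (\<lambda>y. if k = 0 then 1 else 0)" by (simp add: fone_def fun_eq_iff)
  thus ?thesis using smooth_const(2)[OF I y, where a="if k = 0 then 1 else 0" and n=n] by simp
qed

lemma P_fadd:
  assumes I: "open I" and F: "smS I F" and G: "smS I G" and x: "x \<in> I"
  shows "toF (fshift s c (fadd F G)) x = toF (fshift s c F) x + toF (fshift s c G) x"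
  by (rule fps_ext) (simp add: fshift_def D_fadd[OF I F G x] sum.distrib distrib_left)

lemma P_fsub:
  assumes I: "open I" and F: "smS I F" and G: "smS I G" and x: "x \<in> I"
  shows "toF (fshift s c (fsub F G)) x = toF (fshift s c F) x - toF (fshift s c G) x"
  by (rule fps_ext) (simp add: fshift_def D_fsub[OF I F G x] sum_subtractf right_diff_distrib)

lemma P_fscale:
  assumes I: "open I" and F: "smS I F" and x: "x \<in> I"
  shows "toF (fshift s c (fscale l F)) x = fps_const l * toF (fshift s c F) x"
  by (rule fps_ext) (simp add: fshift_def D_fscale[OF I F x] sum_distrib_left mult.left_commute)

lemma P_fone:
  assumes I: "open I" and x: "x \<in> I"
  shows "toF (fshift s c fone) x = 1"
proof (rule fps_ext)
  fix m
  have "fshift s c fone m x = (\<Sum>n\<le>m. if n = 0 then (if m = 0 then 1 else 0) else 0)"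
    unfolding fshift_def D_fone[OF I x] by (rule sum.cong) auto
  also have "\<dots> = (if m = 0 then 1 else 0)" by simp
  finally show "toF (fshift s c fone) x $ m = (1::complex fps) $ m" by simp
qed

lemma P_cong:
  assumes I: "open I" and E: "\<And>k y. y \<in> I \<Longrightarrow> F k y = G k y" and x: "x \<in> I"
  shows "toF (fshift s c F) x = toF (fshift s c G) x"
  by (rule fps_ext) (simp add: fshift_def D_cong[OF I E x])

lemma P_nth0: "toF (fshift s c F) x $ 0 = F 0 x"
  by (simp add: fshift_def)

lemma P_flip: "toF (fshift (-1) 0 F) x $ m = (-1) ^ m * F m x"
proof -
  have "fshift (-1) 0 F m x = (\<Sum>n\<le>m. if n = 0 then (-1) ^ m * F m x else 0)"
    unfolding fshift_def by (rule sum.cong) auto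
  thus ?thesis by simp
qed

lemma toF_fmul: "toF (fmul F G) x = toF F x * toF G x"
  by (rule fps_ext) (simp add: fmul_def fps_mult_nth atLeast0AtMost)
lemma toF_fadd: "toF (fadd F G) x = toF F x + toF G x"
  by (rule fps_ext) (simp add: fadd_def)
lemma toF_fsub: "toF (fsub F G) x = toF F x - toF G x"
  by (rule fps_ext) (simp add: fsub_def)
lemma toF_fscale: "toF (fscale l F) x = fps_const l * toF F x"
  by (rule fps_ext) (simp add: fscale_def)
lemma toF_fone: "toF fone x = 1"
  by (rule fps_ext) (simp add: fone_def)

lemma fshift_fshift':
  assumes "open I" "smS I F" "x \<in> I" "s2 = s * s'" "c2 = c + c' * s"
  shows "toF (fshift s c (fshift s' c' F)) x = toF (fshift s2 c2 F) x"
  using fshift_fshift[OF assms(1-3)] assms(4,5) by simp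

lemma core_alg:
  fixes u v p q A1 B :: "complex fps"
  assumes e1: "A1 * ((u + p) * (u + v)) = fps_const l * (u * u - 1)"
    and e2: "B * ((v + q) * (u + v)) = fps_const l * (v * v - 1)"
    and nz: "u + v \<noteq> 0"
  shows "fps_const l * u - A1 * (u + p) = fps_const l * v - B * (v + q)"
proof -
  have "(fps_const l * u - A1 * (u + p)) * (u + v) = fps_const l * u * (u + v) - A1 * ((u + p) * (u + v))"
    by (simp add: algebra_simps)
  also have "\<dots> = fps_const l * (u * v + 1)" unfolding e1 by (simp add: algebra_simps)
  also have "\<dots> = fps_const l * v * (u + v) - B * ((v + q) * (u + v))" unfolding e2 by (simp add: algebra_simps)
  also have "\<dots> = (fps_const l * v - B * (v + q)) * (u + v)" by (simp add: algebra_simps)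
  finally show ?thesis using nz by simp
qed



theorem proposition1:
  fixes r_c :: real and I :: "real set"
    and a :: "nat \<Rightarrow> real \<Rightarrow> real"
    and V :: "nat \<Rightarrow> complex \<Rightarrow> real \<Rightarrow> complex"
  assumes rc_pos: "r_c > 0"
    and I_open: "open I" and I_interval: "is_interval I" and I_ne: "I \<noteq> {}"
    and a0: "\<forall>x\<in>I. a 0 x = r_c"
    and a_smooth: "\<forall>k\<ge>1. smooth_on I (a k)"
    and V_anal: "\<forall>k. \<forall>x\<in>I. (\<lambda>l. V k l x) holomorphic_on {l. norm l > 4 * r_c}"
    and V_smooth: "\<forall>k. \<forall>l. norm l > 4 * r_c \<longrightarrow> smooth_on I (V k l)"
    and V0: "\<forall>l x. norm l > 4 * r_c \<longrightarrow> x \<in> I \<longrightarrow> V 0 l x = l / w_c r_c l"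
    and eqn: "\<forall>l. norm l > 4 * r_c \<longrightarrow> (\<forall>m. \<forall>x\<in>I.
       (let A = (\<lambda>k y. complex_of_real (a k y)); W = (\<lambda>k. V k l) in
        fmul A (fmul (fadd W (fshift (-1) (-1) W)) (fadd W (fshift (-1) 1 W))) m x
        = fscale l (fsub (fmul W W) fone) m x))"
  shows "\<forall>l. norm l > 4 * r_c \<longrightarrow> (\<forall>sg\<in>{-1, 1::real}. \<forall>m. \<forall>x\<in>I. odd m \<longrightarrow>
       (let A = (\<lambda>k y. complex_of_real (a k y)); W = (\<lambda>k. V k l) in
        fsub (fscale l (fshift 1 (sg / 2) W))
             (fmul (fshift 1 (sg / 2) A) (fadd (fshift 1 (sg / 2) W) (fshift (-1) (3 * sg / 2) W))) m x
        = 0))"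
proof (intro allI impI ballI)
  fix l :: complex assume l: "norm l > 4 * r_c"
  fix sg :: real assume sg: "sg \<in> {-1, 1}"
  fix m :: nat and x :: real assume x: "x \<in> I" and odd: "odd m"
  define A where "A = (\<lambda>k y. complex_of_real (a k y))"
  define W where "W = (\<lambda>k. V k l)"
  note I = I_open
  have smA: "smS I A" unfolding smS_def
  proof
    fix k show "smooth_on I (A k)"
    proof (cases "k = 0")
      case True
      show ?thesis
        by (rule smooth_cong[OF I smooth_const(1)[OF I, of "complex_of_real r_c"]])
           (use a0 True in \<open>simp add: A_def\<close>)
    next
      case False
      thus ?thesis using smooth_of_real(1)[OF I, of "a k"] a_smooth by (simp add: A_def)
    qed
  qed
  have smW: "smS I W" using V_smooth l by (simp add: smS_def W_def)
  define EL where "EL = fmul A (fmul (fadd W (fshift (-1) (-1) W)) (fadd W (fshift (-1) 1 W)))"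
  define ER where "ER = fscale l (fsub (fmul W W) fone)"
  have E: "EL k y = ER k y" if "y \<in> I" for k y
    using eqn l that unfolding EL_def ER_def A_def W_def Let_def by blast
  note sms = smS_fmul[OF I] smS_fadd[OF I] smS_fsub[OF I] smS_fscale[OF I] smS_fone[OF I] smS_fshift[OF I] smA smW
  have PE: "toF (fshift s c EL) x = toF (fshift s c ER) x" for s c
    by (rule P_cong[OF I E x])
  have PEL: "toF (fshift s c EL) x = toF (fshift s c A) x * ((toF (fshift s c W) x + toF (fshift s c (fshift (-1) (-1) W)) x)
      * (toF (fshift s c W) x + toF (fshift s c (fshift (-1) 1 W)) x))" for s c
    unfolding EL_def by (simp add: fshift_fmul[OF I _ _ x] P_fadd[OF I _ _ x] sms)
  have PER: "toF (fshift s c ER) x = fps_const l * (toF (fshift s c W) x * toF (fshift s c W) x - 1)" for s c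
    unfolding ER_def by (simp add: fshift_fmul[OF I _ _ x] P_fscale[OF I _ x] P_fsub[OF I _ _ x] P_fone[OF I x] sms)
  define u where "u = toF (fshift 1 (sg / 2) W) x"
  define v where "v = toF (fshift (-1) (- sg / 2) W) x"
  define p where "p = toF (fshift (-1) (3 * sg / 2) W) x"
  define q where "q = toF (fshift 1 (- 3 * sg / 2) W) x"
  define A1 where "A1 = toF (fshift 1 (sg / 2) A) x"
  define B where "B = toF (fshift (-1) (- sg / 2) A) x"
  have sgc: "sg = -1 \<or> sg = 1" using sg by auto
  have e1: "A1 * ((u + p) * (u + v)) = fps_const l * (u * u - 1)"
  proof -
    have f1: "toF (fshift 1 (sg / 2) (fshift (-1) (-1) W)) x = toF (fshift (-1) (sg / 2 - 1) W) x"
      by (rule fshift_fshift'[OF I smW x]) simp_all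
    have f2: "toF (fshift 1 (sg / 2) (fshift (-1) 1 W)) x = toF (fshift (-1) (sg / 2 + 1) W) x"
      by (rule fshift_fshift'[OF I smW x]) simp_all
    have base: "A1 * ((u + toF (fshift (-1) (sg / 2 - 1) W) x) * (u + toF (fshift (-1) (sg / 2 + 1) W) x)) = fps_const l * (u * u - 1)"
      using PE[of 1 "sg / 2"] unfolding PEL PER f1 f2 u_def A1_def .
    from sgc show ?thesis
    proof
      assume h: "sg = -1"
      have r1: "sg / 2 - 1 = 3 * sg / 2" and r2: "sg / 2 + 1 = - sg / 2" using h by simp_all
      show ?thesis using base unfolding r1 r2 p_def v_def .
    next
      assume h: "sg = 1"
      have r1: "sg / 2 - 1 = - sg / 2" and r2: "sg / 2 + 1 = 3 * sg / 2" using h by simp_all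
      show ?thesis using base unfolding r1 r2 p_def v_def by (metis mult.commute)
    qed
  qed
  have e2: "B * ((v + q) * (u + v)) = fps_const l * (v * v - 1)"
  proof -
    have f1: "toF (fshift (-1) (- sg / 2) (fshift (-1) (-1) W)) x = toF (fshift 1 (- sg / 2 + 1) W) x"
      by (rule fshift_fshift'[OF I smW x]) simp_all
    have f2: "toF (fshift (-1) (- sg / 2) (fshift (-1) 1 W)) x = toF (fshift 1 (- sg / 2 - 1) W) x"
      by (rule fshift_fshift'[OF I smW x]) simp_all
    have base: "B * ((v + toF (fshift 1 (- sg / 2 + 1) W) x) * (v + toF (fshift 1 (- sg / 2 - 1) W) x)) = fps_const l * (v * v - 1)"
      using PE[of "-1" "- sg / 2"] unfolding PEL PER f1 f2 v_def B_def .
    from sgc show ?thesis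
    proof
      assume h: "sg = -1"
      have r1: "- sg / 2 + 1 = - 3 * sg / 2" and r2: "- sg / 2 - 1 = sg / 2" using h by simp_all
      show ?thesis using base unfolding r1 r2 q_def u_def by (metis add.commute)
    next
      assume h: "sg = 1"
      have r1: "- sg / 2 + 1 = sg / 2" and r2: "- sg / 2 - 1 = - 3 * sg / 2" using h by simp_all
      show ?thesis using base unfolding r1 r2 q_def u_def by (metis mult.commute add.commute)
    qed
  qed
  have nz: "u + v \<noteq> 0"
  proof
    assume "u + v = 0"
    hence "(u + v) $ 0 = 0" by simp
    hence "2 * V 0 l x = 0" unfolding u_def v_def by (simp add: fshift_def W_def)
    hence V00: "V 0 l x = 0" by simp
    have l0: "l \<noteq> 0" using l rc_pos by auto
    have "1 - 4 * complex_of_real r_c / l \<noteq> 0"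
    proof
      assume "1 - 4 * complex_of_real r_c / l = 0"
      hence "l = 4 * complex_of_real r_c" using l0 by (simp add: field_simps)
      hence "norm l = 4 * r_c" using rc_pos by (simp add: norm_mult)
      thus False using l by simp
    qed
    hence "w_c r_c l \<noteq> 0" using l0 by (simp add: w_c_def)
    hence "V 0 l x \<noteq> 0" using V0 l x l0 by simp
    thus False using V00 by simp
  qed
  have core: "fps_const l * u - A1 * (u + p) = fps_const l * v - B * (v + q)"
    by (rule core_alg[OF e1 e2 nz])
  define Tg where "Tg = fsub (fscale l (fshift 1 (sg / 2) W))
             (fmul (fshift 1 (sg / 2) A) (fadd (fshift 1 (sg / 2) W) (fshift (-1) (3 * sg / 2) W)))"
  have T1: "toF Tg x = fps_const l * u - A1 * (u + p)"
    unfolding Tg_def u_def A1_def p_def by (simp add: toF_fsub toF_fscale toF_fmul toF_fadd)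
  have g1: "toF (fshift (-1) 0 (fshift 1 (sg / 2) W)) x = v"
    unfolding v_def by (rule fshift_fshift'[OF I smW x]) simp_all
  have g2: "toF (fshift (-1) 0 (fshift 1 (sg / 2) A)) x = B"
    unfolding B_def by (rule fshift_fshift'[OF I smA x]) simp_all
  have g3: "toF (fshift (-1) 0 (fshift (-1) (3 * sg / 2) W)) x = q"
    unfolding q_def by (rule fshift_fshift'[OF I smW x]) simp_all
  have T2: "toF (fshift (-1) 0 Tg) x = fps_const l * v - B * (v + q)"
    unfolding Tg_def
    by (simp add: fshift_fmul[OF I _ _ x] P_fscale[OF I _ x] P_fsub[OF I _ _ x] P_fadd[OF I _ _ x] sms g1 g2 g3)
  have "toF (fshift (-1) 0 Tg) x = toF Tg x" using T1 T2 core by simp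
  hence "fps_nth (toF (fshift (-1) 0 Tg) x) m = fps_nth (toF Tg x) m" by simp
  hence "(-1) ^ m * Tg m x = Tg m x" using P_flip[of Tg x m] by simp
  hence "Tg m x = 0" using odd by simp
  thus "(let A = (\<lambda>k y. complex_of_real (a k y)); W = (\<lambda>k. V k l) in
        fsub (fscale l (fshift 1 (sg / 2) W))
             (fmul (fshift 1 (sg / 2) A) (fadd (fshift 1 (sg / 2) W) (fshift (-1) (3 * sg / 2) W))) m x
        = 0)" unfolding Tg_def A_def W_def Let_def .
qed

end
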